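(* Let $N\ge 3$ and $p>0$. There exists $C>0$ such that $$\langle L_-W,W\rangle_{L^2(\Gamma)}\ge C\|W\|_{H^1(\Gamma)}^2\quad\text{for every } W\in H^1_\Gamma\cap L^2_c.$$
   Context: Let $\Gamma$ be the star graph of $N$ half-lines joined at a single vertex, each edge parametrized by $x\in[0,\infty)$ with vertex at $x=0$. Functions are real-valued vectors $W=(w_1,\dots,w_N)^T$; $L^2(\Gamma)=\oplus_{j=1}^N L^2(\mathbb{R}^+)$ with $\langle F,G\rangle_{L^2(\Gamma)}=\sum_j\int_0^\infty f_jg_j\,dx$, $H^1(\Gamma)=\oplus_jH^1(\mathbb{R}^+)$, $H^1_\Gamma=\{W\in H^1(\Gamma):w_1(0)=\dots=w_N(0)\}$. Let $\phi(x)=\operatorname{sech}^{1/p}(px)$, $\Phi=\phi\,(1,\dots,1)^T$, and $L^2_c=\{V\in L^2(\Gamma):\langle V,\Phi\rangle_{L^2(\Gamma)}=0\}$. The quadratic form of $L_-=-\Delta+1-(p+1)\Phi^{2p}$ is $\langle L_-W,W\rangle_{L^2(\Gamma)}=\sum_{j=1}^N\int_0^\infty\big[(w_j')^2+w_j^2-(p+1)\phi^{2p}w_j^2\big]dx$ for $W\in H^1_\Gamma$. *)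

theory Defs
  imports "HOL-Analysis.Analysis"
begin

definition L2_half :: "(real \<Rightarrow> real) \<Rightarrow> bool" where
  "L2_half w \<longleftrightarrow> set_borel_measurable lborel {0..} w \<and>
                   set_integrable lborel {0..} (\<lambda>x. (w x)^2)"

text \<open>H1(R+): w (continuous representative) lies in L2 and is absolutely continuous
with derivative w' in L2, i.e. w x = w 0 + integral of w' over [0,x].\<close>
definition H1_half :: "(real \<Rightarrow> real) \<Rightarrow> (real \<Rightarrow> real) \<Rightarrow> bool" where
  "H1_half w w' \<longleftrightarrow> L2_half w \<and> L2_half w' \<and>
     (\<forall>x\<ge>0. set_integrable lborel {0..x} w' \<and> w x = w 0 + (LBINT t:{0..x}. w' t))"

definition phi :: "real \<Rightarrow> real \<Rightarrow> real" where
  "phi p x = (1 / cosh (p * x)) powr (1 / p)"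

definition H1_Gamma :: "nat \<Rightarrow> (nat \<Rightarrow> real \<Rightarrow> real) \<Rightarrow> (nat \<Rightarrow> real \<Rightarrow> real) \<Rightarrow> bool" where
  "H1_Gamma N W W' \<longleftrightarrow> (\<forall>j<N. H1_half (W j) (W' j)) \<and> (\<forall>j<N. W j 0 = W 0 0)"

text \<open>Orthogonality to Phi = phi (1,...,1) in L2(Gamma).\<close>
definition in_L2c :: "nat \<Rightarrow> real \<Rightarrow> (nat \<Rightarrow> real \<Rightarrow> real) \<Rightarrow> bool" where
  "in_L2c N p W \<longleftrightarrow> (\<forall>j<N. L2_half (W j)) \<and>
     (\<Sum>j<N. LBINT x:{0..}. W j x * phi p x) = 0"

definition H1_norm_sq :: "nat \<Rightarrow> (nat \<Rightarrow> real \<Rightarrow> real) \<Rightarrow> (nat \<Rightarrow> real \<Rightarrow> real) \<Rightarrow> real" where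
  "H1_norm_sq N W W' = (\<Sum>j<N. LBINT x:{0..}. (W' j x)^2 + (W j x)^2)"

text \<open>Quadratic form of L_- = -Delta + 1 - (p+1) Phi^(2p).\<close>
definition Lminus_form :: "nat \<Rightarrow> real \<Rightarrow> (nat \<Rightarrow> real \<Rightarrow> real) \<Rightarrow> (nat \<Rightarrow> real \<Rightarrow> real) \<Rightarrow> real" where
  "Lminus_form N p W W' = (\<Sum>j<N. LBINT x:{0..}.
      (W' j x)^2 + (W j x)^2 - (p + 1) * (phi p x) powr (2 * p) * (W j x)^2)"

end

theory Submission
  imports Defs "HOL-Real_Asymp.Real_Asymp"
begin


definition ac :: "real \<Rightarrow> (real \<Rightarrow> real) \<Rightarrow> (real \<Rightarrow> real) \<Rightarrow> bool" where
  "ac X u u' \<longleftrightarrow> set_integrable lborel {0..X} u' \<and> (\<forall>x\<in>{0..X}. u x = u 0 + (LBINT t:{0..x}. u' t))"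

lemma ac_eq:
  assumes "ac X u u'" "0 \<le> x" "x \<le> X"
  shows "u x = u 0 + (LBINT t:{0..x}. u' t)"
  using assms unfolding ac_def by (meson atLeastAtMost_iff)

lemma ac_int:
  assumes "ac X u u'"
  shows "set_integrable lborel {0..X} u'"
  using assms unfolding ac_def by blast

lemma ac_cont:
  assumes "ac X u u'"
  shows "continuous_on {0..X} u"
proof -
  have I: "set_integrable lborel {0..X} u'" using assms ac_def by blast
  have "u' integrable_on {0..X}" using set_borel_integral_eq_integral(1)[OF I] .
  then have c: "continuous_on {0..X} (\<lambda>x. integral {0..x} u')"
    by (rule indefinite_integral_continuous_1)
  have "u x = u 0 + integral {0..x} u'" if "x \<in> {0..X}" for x
  proof -
    have "set_integrable lborel {0..x} u'"
      by (rule set_integrable_subset[OF I]) (use that in auto)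
    then show ?thesis using assms that set_borel_integral_eq_integral(2) unfolding ac_def by metis
  qed
  moreover have "continuous_on {0..X} (\<lambda>x. u 0 + integral {0..x} u')"
    by (intro continuous_on_add continuous_on_const c)
  ultimately show ?thesis
    using continuous_on_cong by (metis (no_types, lifting))
qed

lemma ac_bound:
  assumes "ac X u u'"
  obtains B where "B \<ge> 0" "\<And>x. x \<in> {0..X} \<Longrightarrow> \<bar>u x\<bar> \<le> B"
  using continuous_on_compact_bound[OF compact_Icc ac_cont[OF assms]] by auto

lemma ac_meas:
  assumes "ac X u u'"
  shows "set_borel_measurable lborel {0..X} u"
proof -
  have "set_borel_measurable borel {0..X} u"
    by (rule set_measurable_continuous_on[OF _ ac_cont[OF assms]]) auto
  then show ?thesis unfolding set_borel_measurable_def by simp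
qed

lemma ac_sub:
  assumes "ac X u u'" "0 \<le> Y" "Y \<le> X"
  shows "ac Y u u'"
proof -
  have "set_integrable lborel {0..Y} u'"
  proof (rule set_integrable_subset)
    show "set_integrable lborel {0..X} u'" using assms(1) unfolding ac_def by blast
  qed (use assms in auto)
  moreover have "\<forall>x\<in>{0..Y}. u x = u 0 + (LBINT t:{0..x}. u' t)"
  proof
    fix x assume "x \<in> {0..Y}"
    then have "x \<in> {0..X}" using assms by auto
    then show "u x = u 0 + (LBINT t:{0..x}. u' t)" using assms(1) unfolding ac_def by blast
  qed
  ultimately show ?thesis unfolding ac_def by blast
qed


lemma sbm_mult:
  fixes f g :: "real \<Rightarrow> real"
  assumes "set_borel_measurable lborel A f" "set_borel_measurable lborel A g"
  shows "set_borel_measurable lborel A (\<lambda>x. f x * g x)"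
proof -
  have "(\<lambda>x. indicator A x *\<^sub>R (f x * g x)) = (\<lambda>x. (indicator A x *\<^sub>R f x) * (indicator A x *\<^sub>R g x))"
    by (auto simp: indicator_def fun_eq_iff)
  moreover have "(\<lambda>x. (indicator A x *\<^sub>R f x) * (indicator A x *\<^sub>R g x)) \<in> borel_measurable lborel"
    using assms unfolding set_borel_measurable_def by (intro borel_measurable_times) auto
  ultimately show ?thesis unfolding set_borel_measurable_def by simp
qed

lemma si_sbm:
  fixes f :: "real \<Rightarrow> real"
  shows "set_integrable lborel A f \<Longrightarrow> set_borel_measurable lborel A f"
  unfolding set_integrable_def set_borel_measurable_def by (rule borel_measurable_integrable)

lemma si_bounded_mult:
  fixes f g :: "real \<Rightarrow> real"
  assumes "set_integrable lborel A f" "set_borel_measurable lborel A g" "\<And>x. x \<in> A \<Longrightarrow> \<bar>g x\<bar> \<le> B"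
  shows "set_integrable lborel A (\<lambda>x. f x * g x)"
proof (rule set_integrable_bound[of _ _ "\<lambda>x. B * f x"])
  show "set_integrable lborel A (\<lambda>x. B * f x)" using assms(1) by auto
  show "set_borel_measurable lborel A (\<lambda>x. f x * g x)"
    by (rule sbm_mult[OF si_sbm[OF assms(1)] assms(2)])
  have "B \<ge> 0 \<or> A = {}" using assms(3) by (meson abs_ge_zero all_not_in_conv order_trans)
  then show "AE x in lborel. x \<in> A \<longrightarrow> norm (f x * g x) \<le> norm (B * f x)"
  proof (intro AE_I2 impI)
    fix x assume "x \<in> A"
    then have "\<bar>f x\<bar> * \<bar>g x\<bar> \<le> \<bar>f x\<bar> * B" using assms(3) by (intro mult_left_mono) auto
    then show "norm (f x * g x) \<le> norm (B * f x)" using \<open>x \<in> A\<close> assms(3)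
      by (auto simp: abs_mult mult.commute) (smt (verit, best) abs_ge_zero)
  qed
qed

lemma ac_tail:
  assumes "ac X v v'" "0 \<le> s" "s \<le> X"
  shows "(LBINT r:{s..X}. v' r) = v X - v s"
proof -
  have I: "set_integrable lborel {0..X} v'" using assms(1) ac_def by blast
  have I1: "set_integrable lborel {0..<s} v'" by (rule set_integrable_subset[OF I]) (use assms in auto)
  have I2: "set_integrable lborel {s..X} v'" by (rule set_integrable_subset[OF I]) (use assms in auto)
  have "{0..X} = {0..<s} \<union> {s..X}" using assms by auto
  then have "(LBINT r:{0..X}. v' r) = (LBINT r:{0..<s}. v' r) + (LBINT r:{s..X}. v' r)"
  proof -
    have "{0..<s} \<inter> {s..X} = {}" by auto
    then show ?thesis using set_integral_Un[OF _ I1 I2] \<open>{0..X} = {0..<s} \<union> {s..X}\<close> by simp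
  qed
  moreover have "(LBINT r:{0..<s}. v' r) = (LBINT r:{0..s}. v' r)"
    by (rule set_integral_discrete_difference[where X="{s}"]) auto
  moreover have "v X = v 0 + (LBINT r:{0..X}. v' r)" using assms ac_eq by auto
  moreover have "v s = v 0 + (LBINT r:{0..s}. v' r)" using assms ac_eq by auto
  ultimately show ?thesis by linarith
qed




lemma ibp_fubini:
  fixes u u' v v' :: "real \<Rightarrow> real"
  assumes X: "0 \<le> X" and U: "ac X u u'" and V: "ac X v v'"
  shows "(LBINT r:{0..X}. v' r * (u r - u 0)) = (LBINT s:{0..X}. u' s * (v X - v s))"
proof -
  define U' where "U' s = indicator {0..X} s * u' s" for s
  define V' where "V' s = indicator {0..X} s * v' s" for s
  have iU: "integrable lborel U'" using ac_int[OF U] unfolding set_integrable_def U'_def by simp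
  have iV: "integrable lborel V'" using ac_int[OF V] unfolding set_integrable_def V'_def by simp
  have [measurable]: "U' \<in> borel_measurable lborel" "V' \<in> borel_measurable lborel"
    using iU iV by auto
  define F where "F s r = U' s * V' r * (if s \<le> r then 1 else 0)" for s r :: real
  define G where "G s r = \<bar>U' s\<bar> * \<bar>V' r\<bar>" for s r :: real
  have mF: "case_prod F \<in> borel_measurable (lborel \<Otimes>\<^sub>M lborel)"
    unfolding F_def by measurable
  have mG: "case_prod G \<in> borel_measurable (lborel \<Otimes>\<^sub>M lborel)"
    unfolding G_def by measurable
  have iG: "integrable (lborel \<Otimes>\<^sub>M lborel) (case_prod G)"
  proof (rule lborel_pair.Fubini_integrable[OF mG])
    have "(\<lambda>s. \<integral>r. norm (case_prod G (s, r)) \<partial>lborel) = (\<lambda>s. \<bar>U' s\<bar> * (\<integral>r. \<bar>V' r\<bar> \<partial>lborel))"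
      unfolding G_def by (auto simp: abs_mult)
    then show "integrable lborel (\<lambda>s. \<integral>r. norm (case_prod G (s, r)) \<partial>lborel)"
      using iU by (simp add: integrable_abs)
    show "AE s in lborel. integrable lborel (\<lambda>r. case_prod G (s, r))"
      unfolding G_def using iV by (simp add: integrable_abs)
  qed
  have iF: "integrable (lborel \<Otimes>\<^sub>M lborel) (case_prod F)"
    by (rule Bochner_Integration.integrable_bound[OF iG mF]) (auto simp: F_def G_def abs_mult)
  have fub: "(\<integral>r. (\<integral>s. F s r \<partial>lborel) \<partial>lborel) = (\<integral>s. (\<integral>r. F s r \<partial>lborel) \<partial>lborel)"
    by (rule lborel_pair.Fubini_integral[OF iF])
  have in1: "(\<integral>s. F s r \<partial>lborel) = V' r * (u r - u 0)" for r
  proof (cases "r \<in> {0..X}")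
    case True
    have "F s r = V' r * (indicator {0..r} s * u' s)" for s
      using True by (auto simp: F_def U'_def V'_def indicator_def)
    then have "(\<integral>s. F s r \<partial>lborel) = V' r * (LBINT s:{0..r}. u' s)"
      by (simp add: set_lebesgue_integral_def)
    also have "\<dots> = V' r * (u r - u 0)"
    proof -
      have "u r = u 0 + (LBINT s:{0..r}. u' s)" using ac_eq[OF U, of r] True by simp
      then show ?thesis by simp
    qed
    finally show ?thesis .
  next
    case False
    then show ?thesis by (simp add: F_def V'_def)
  qed
  have in2: "(\<integral>r. F s r \<partial>lborel) = U' s * (v X - v s)" for s
  proof (cases "s \<in> {0..X}")
    case True
    have "F s r = U' s * (indicator {s..X} r * v' r)" for r
      using True by (auto simp: F_def U'_def V'_def indicator_def)
    then have "(\<integral>r. F s r \<partial>lborel) = U' s * (LBINT r:{s..X}. v' r)"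
      by (simp add: set_lebesgue_integral_def)
    also have "\<dots> = U' s * (v X - v s)"
    proof -
      have "(LBINT r:{s..X}. v' r) = v X - v s" using ac_tail[OF V, of s] True by simp
      then show ?thesis by simp
    qed
    finally show ?thesis .
  next
    case False
    then show ?thesis by (simp add: F_def U'_def)
  qed
  show ?thesis
    using fub unfolding in1 in2 set_lebesgue_integral_def U'_def V'_def
    by (simp add: mult.assoc)
qed


lemma ibp:
  fixes u u' v v' :: "real \<Rightarrow> real"
  assumes X: "0 \<le> X" and U: "ac X u u'" and V: "ac X v v'"
  shows "set_integrable lborel {0..X} (\<lambda>x. u' x * v x + u x * v' x)"
    and "u X * v X - u 0 * v 0 = (LBINT x:{0..X}. u' x * v x + u x * v' x)"
proof -
  obtain Bu where Bu: "\<And>x. x \<in> {0..X} \<Longrightarrow> \<bar>u x\<bar> \<le> Bu" using ac_bound[OF U] by metis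
  obtain Bv where Bv: "\<And>x. x \<in> {0..X} \<Longrightarrow> \<bar>v x\<bar> \<le> Bv" using ac_bound[OF V] by metis
  have Iu: "set_integrable lborel {0..X} u'" by (rule ac_int[OF U])
  have Iv: "set_integrable lborel {0..X} v'" by (rule ac_int[OF V])
  have I1: "set_integrable lborel {0..X} (\<lambda>x. u' x * v x)"
    by (rule si_bounded_mult[OF Iu ac_meas[OF V] Bv])
  have I2': "set_integrable lborel {0..X} (\<lambda>x. v' x * u x)"
    by (rule si_bounded_mult[OF Iv ac_meas[OF U] Bu])
  have I2: "set_integrable lborel {0..X} (\<lambda>x. u x * v' x)"
    using I2' by (simp add: mult.commute)
  show "set_integrable lborel {0..X} (\<lambda>x. u' x * v x + u x * v' x)"
    using set_integral_add(1)[OF I1 I2] .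
  have eU: "u X = u 0 + (LBINT t:{0..X}. u' t)" using ac_eq[OF U, of X] X by simp
  have eV: "v X = v 0 + (LBINT t:{0..X}. v' t)" using ac_eq[OF V, of X] X by simp
  have Iu0: "set_integrable lborel {0..X} (\<lambda>r. u 0 * v' r)" using Iv by auto
  have IvX: "set_integrable lborel {0..X} (\<lambda>r. v X * u' r)" using Iu by auto
  have "(LBINT r:{0..X}. v' r * (u r - u 0)) = (LBINT r:{0..X}. u r * v' r - u 0 * v' r)"
    by (simp add: algebra_simps)
  also have "\<dots> = (LBINT r:{0..X}. u r * v' r) - u 0 * (LBINT r:{0..X}. v' r)"
    using set_integral_diff(2)[OF I2 Iu0] by simp
  finally have L: "(LBINT r:{0..X}. v' r * (u r - u 0)) = (LBINT r:{0..X}. u r * v' r) - u 0 * (LBINT r:{0..X}. v' r)" .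
  have "(LBINT s:{0..X}. u' s * (v X - v s)) = (LBINT s:{0..X}. v X * u' s - u' s * v s)"
    by (simp add: algebra_simps)
  also have "\<dots> = v X * (LBINT s:{0..X}. u' s) - (LBINT s:{0..X}. u' s * v s)"
    using set_integral_diff(2)[OF IvX I1] by simp
  finally have R: "(LBINT s:{0..X}. u' s * (v X - v s)) = v X * (LBINT s:{0..X}. u' s) - (LBINT s:{0..X}. u' s * v s)" .
  have S: "(LBINT x:{0..X}. u' x * v x + u x * v' x) = (LBINT x:{0..X}. u' x * v x) + (LBINT x:{0..X}. u x * v' x)"
    using set_integral_add(2)[OF I1 I2] .
  from ibp_fubini[OF X U V] L R S eU eV
  show "u X * v X - u 0 * v 0 = (LBINT x:{0..X}. u' x * v x + u x * v' x)"
    by (simp add: algebra_simps)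
qed

lemma ac_mult:
  fixes u u' v v' :: "real \<Rightarrow> real"
  assumes X: "0 \<le> X" and U: "ac X u u'" and V: "ac X v v'"
  shows "ac X (\<lambda>x. u x * v x) (\<lambda>x. u' x * v x + u x * v' x)"
  unfolding ac_def
proof
  show "set_integrable lborel {0..X} (\<lambda>x. u' x * v x + u x * v' x)" by (rule ibp(1)[OF X U V])
  show "\<forall>x\<in>{0..X}. u x * v x = u 0 * v 0 + (LBINT t:{0..x}. u' t * v t + u t * v' t)"
  proof
    fix x assume x: "x \<in> {0..X}"
    have "ac x u u'" "ac x v v'" using ac_sub[OF U] ac_sub[OF V] x by auto
    from ibp(2)[OF _ this] x show "u x * v x = u 0 * v 0 + (LBINT t:{0..x}. u' t * v t + u t * v' t)"
      by simp
  qed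
qed


lemma ac_C1:
  fixes f f' :: "real \<Rightarrow> real"
  assumes X: "0 \<le> X" and d: "\<And>x. (f has_real_derivative f' x) (at x)" and c: "continuous_on UNIV f'"
  shows "ac X f f'"
  unfolding ac_def
proof
  show "set_integrable lborel {0..X} f'"
    by (rule borel_integrable_atLeastAtMost'[OF continuous_on_subset[OF c]]) auto
  show "\<forall>x\<in>{0..X}. f x = f 0 + (LBINT t:{0..x}. f' t)"
  proof
    fix x assume x: "x \<in> {0..X}"
    have "integral\<^sup>L lborel (\<lambda>t. indicator {0..x} t *\<^sub>R f' t) = f x - f 0"
    proof (rule integral_FTC_atLeastAtMost)
      show "0 \<le> x" using x by auto
      show "(f has_vector_derivative f' y) (at y within {0..x})" for y
        using d[of y] unfolding has_real_derivative_iff_has_vector_derivative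
        by (rule has_vector_derivative_at_within)
      show "continuous_on {0..x} f'" by (rule continuous_on_subset[OF c]) auto
    qed
    then show "f x = f 0 + (LBINT t:{0..x}. f' t)" unfolding set_lebesgue_integral_def by simp
  qed
qed

definition tt :: "real \<Rightarrow> real \<Rightarrow> real" where "tt p x = tanh (p * x)"
definition ps :: "real \<Rightarrow> real \<Rightarrow> real" where "ps p x = cosh (p * x) powr (1 / p)"

lemma cosh_pos': "cosh (x::real) > 0"
  by (simp add: cosh_real_pos)

lemma deriv_tt: "(tt p has_real_derivative p * (1 - tt p x ^ 2)) (at x)"
  unfolding tt_def
  by (auto intro!: derivative_eq_intros simp: cosh_pos' less_imp_neq[symmetric] mult.commute)

lemma cont_tt: "continuous_on UNIV (\<lambda>x. p * (1 - tt p x ^ 2))"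
  unfolding tt_def
  by (auto intro!: continuous_intros simp: cosh_pos' less_imp_neq[symmetric])

lemma deriv_ps:
  assumes p: "p > 0"
  shows "(ps p has_real_derivative ps p x * tt p x) (at x)"
proof -
  have "((\<lambda>x. cosh (p * x) powr (1 / p)) has_real_derivative
      (1 / p) * cosh (p * x) powr (1 / p - of_nat 1) * (sinh (p * x) * p)) (at x)"
    by (rule DERIV_fun_powr) (auto intro!: derivative_eq_intros simp: cosh_pos')
  moreover have "(1 / p) * cosh (p * x) powr (1 / p - of_nat 1) * (sinh (p * x) * p) = ps p x * tt p x"
  proof -
    have c: "cosh (p * x) > 0" by (rule cosh_pos')
    have "cosh (p * x) powr (1 / p - of_nat 1) = cosh (p * x) powr (1 / p) / cosh (p * x)"
      using c by (simp add: powr_diff)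
    then show ?thesis using p c by (simp add: ps_def tt_def tanh_def field_simps)
  qed
  ultimately show ?thesis unfolding ps_def by simp
qed

lemma cont_ps: "continuous_on UNIV (\<lambda>x. ps p x * tt p x)"
  unfolding tt_def ps_def
  by (auto intro!: continuous_intros simp: cosh_pos' less_imp_neq[symmetric])

lemma ac_tt: "0 \<le> X \<Longrightarrow> ac X (tt p) (\<lambda>x. p * (1 - tt p x ^ 2))"
  by (rule ac_C1[OF _ deriv_tt cont_tt])

lemma ac_ps: "0 \<le> X \<Longrightarrow> p > 0 \<Longrightarrow> ac X (ps p) (\<lambda>x. ps p x * tt p x)"
  by (rule ac_C1[OF _ deriv_ps cont_ps])




lemma quad_cs:
  fixes A B P :: real
  assumes B: "B \<ge> 0" and q: "\<And>c. 0 \<le> A - 2 * c * P + c^2 * B"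
  shows "P^2 \<le> A * B"
proof (cases "B > 0")
  case True
  have "0 \<le> A - 2 * (P/B) * P + (P/B)^2 * B" by (rule q)
  then have "0 \<le> A - P^2 / B" using True by (simp add: power2_eq_square field_simps)
  then show ?thesis using True by (simp add: field_simps)
next
  case False
  then have B0: "B = 0" using B by simp
  show ?thesis
  proof (cases "P = 0")
    case False
    have "0 \<le> A - 2 * ((A+1)/(2*P)) * P" using q[of "(A+1)/(2*P)"] B0 by simp
    then have "0 \<le> A - (A + 1)" using False by (simp add: field_simps)
    then show ?thesis by simp
  qed (simp add: B0)
qed

lemma cs_set:
  fixes a b :: "real \<Rightarrow> real"
  assumes ia: "set_integrable lborel S (\<lambda>x. a x^2)" and ib: "set_integrable lborel S (\<lambda>x. b x^2)"
    and iab: "set_integrable lborel S (\<lambda>x. a x * b x)"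
  shows "(LBINT x:S. a x * b x)^2 \<le> (LBINT x:S. a x^2) * (LBINT x:S. b x^2)"
proof (rule quad_cs)
  show "0 \<le> (LBINT x:S. b x^2)"
  proof -
    have "set_integrable lborel S (\<lambda>x. 0::real)" by (simp add: set_integrable_def)
    from set_integral_mono[OF this ib] show ?thesis by simp
  qed
  fix c :: real
  have i1: "set_integrable lborel S (\<lambda>x. 2 * c * (a x * b x))" using iab by auto
  have i2: "set_integrable lborel S (\<lambda>x. c^2 * b x^2)" using ib by auto
  have i3: "set_integrable lborel S (\<lambda>x. a x^2 - 2 * c * (a x * b x))"
    using set_integral_diff(1)[OF ia i1] .
  have i4: "set_integrable lborel S (\<lambda>x. a x^2 - 2 * c * (a x * b x) + c^2 * b x^2)"
    using set_integral_add(1)[OF i3 i2] .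
  have "0 \<le> (LBINT x:S. a x^2 - 2 * c * (a x * b x) + c^2 * b x^2)"
  proof -
    have "(LBINT x:S. (0::real)) \<le> (LBINT x:S. a x^2 - 2 * c * (a x * b x) + c^2 * b x^2)"
    proof (rule set_integral_mono[OF _ i4])
      show "set_integrable lborel S (\<lambda>x. 0::real)" by (simp add: set_integrable_def)
      fix x
      have "0 \<le> (a x - c * b x)^2" by simp
      then show "0 \<le> a x^2 - 2 * c * (a x * b x) + c^2 * b x^2" by (simp add: power2_eq_square algebra_simps)
    qed
    then show ?thesis by simp
  qed
  also have "\<dots> = (LBINT x:S. a x^2) - 2 * c * (LBINT x:S. a x * b x) + c^2 * (LBINT x:S. b x^2)"
    using set_integral_add(2)[OF i3 i2] set_integral_diff(2)[OF ia i1] by simp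
  finally show "0 \<le> (LBINT x:S. a x^2) - 2 * c * (LBINT x:S. a x * b x) + c^2 * (LBINT x:S. b x^2)" .
qed

lemma exp_integrable: "set_integrable lborel {0..} (\<lambda>x::real. exp (- x))"
proof -
  have "set_integrable lborel (einterval 0 \<infinity>) (\<lambda>x::real. exp (- x))"
  proof (rule interval_integral_FTC_nonneg(1)[where F="\<lambda>x. - exp (- x)" and A="-1" and B=0])
    show "(0::ereal) < \<infinity>" by simp
    show "DERIV (\<lambda>x. - exp (- x)) x :> exp (- x)" for x
      by (auto intro!: derivative_eq_intros)
    show "isCont (\<lambda>x. exp (- x)) x" for x :: real by (intro continuous_intros)
    show "AE x in lborel. 0 < ereal x \<longrightarrow> ereal x < \<infinity> \<longrightarrow> 0 \<le> exp (- x)" by simp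
    show "(((\<lambda>x. - exp (- x)) \<circ> real_of_ereal) \<longlongrightarrow> -1) (at_right 0)"
      by (auto simp: zero_ereal_def ereal_tendsto_simps intro!: tendsto_eq_intros)
    show "(((\<lambda>x. - exp (- x)) \<circ> real_of_ereal) \<longlongrightarrow> 0) (at_left \<infinity>)"
      unfolding ereal_tendsto_simps by real_asymp
  qed
  then have "set_integrable lborel {0<..} (\<lambda>x::real. exp (- x))"
    by (simp add: zero_ereal_def)
  moreover have "set_integrable lborel {0<..} (\<lambda>x::real. exp (- x)) \<longleftrightarrow> set_integrable lborel {0..} (\<lambda>x::real. exp (- x))"
    by (rule set_integrable_discrete_difference[where X="{0}"]) auto
  ultimately show ?thesis by blast
qed


lemma cosh_ge_half_exp: "z \<ge> 0 \<Longrightarrow> exp z / 2 \<le> cosh (z::real)"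
  by (simp add: cosh_def)

lemma cosh_le_exp: "z \<ge> 0 \<Longrightarrow> cosh (z::real) \<le> exp z"
  unfolding cosh_def using exp_le_cancel_iff[of "-z" z] by simp

lemma ps_pos: "ps p x > 0"
  unfolding ps_def using cosh_pos'[of "p*x"] by simp

lemma phi_eq: "phi p x = 1 / ps p x"
  unfolding phi_def ps_def using cosh_pos'[of "p*x"] by (simp add: powr_divide)

lemma phi_pos: "phi p x > 0"
  using ps_pos[of p x] phi_eq by simp

lemma ps_0: "ps p 0 = 1"
  by (simp add: ps_def)

lemma phi_pow:
  assumes p: "p > 0"
  shows "phi p x powr (2 * p) = 1 - tt p x ^ 2"
proof -
  have c: "cosh (p*x) > 0" by (rule cosh_pos')
  have "phi p x powr (2 * p) = (1 / cosh (p*x)) powr ((1/p) * (2*p))"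
    unfolding phi_def using c by (simp add: powr_powr)
  also have "\<dots> = (1 / cosh (p*x)) powr 2" using p by simp
  also have "\<dots> = (1 / cosh (p*x))^2" using c by (simp add: powr_numeral)
  also have "\<dots> = 1 - tt p x ^ 2"
  proof -
    have "1 - tt p x ^ 2 = (cosh (p*x) ^ 2 - sinh (p*x) ^ 2) / cosh (p*x) ^ 2"
      using c by (simp add: tt_def tanh_def field_simps)
    then show ?thesis by (simp add: hyperbolic_pythagoras power_one_over)
  qed
  finally show ?thesis .
qed

lemma tt_bounds: "tt p x ^ 2 \<le> 1"
proof -
  have "0 \<le> (1 - tanh (p*x)) * (1 + tanh (p*x))"
    using tanh_real_bounds[of "p*x"] by (intro mult_nonneg_nonneg) auto
  then show ?thesis unfolding tt_def by (simp add: power2_eq_square algebra_simps)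
qed

lemma tt_nonneg: "p > 0 \<Longrightarrow> x \<ge> 0 \<Longrightarrow> tt p x \<ge> 0"
  unfolding tt_def by simp

lemma ps_le: assumes p: "p > 0" and y: "y \<ge> 0" shows "ps p y \<le> exp y"
proof -
  have "ps p y \<le> exp (p*y) powr (1/p)"
    unfolding ps_def using p y by (intro powr_mono2 cosh_le_exp) (auto simp: less_imp_le cosh_pos')
  also have "\<dots> = exp y" using p by (simp add: powr_def)
  finally show ?thesis .
qed

lemma phi_le: assumes p: "p > 0" and x: "x \<ge> 0" shows "phi p x \<le> 2 powr (1/p) * exp (- x)"
proof -
  have c: "exp (p*x) / 2 \<le> cosh (p*x)" using p x by (intro cosh_ge_half_exp) simp
  have "1 / cosh (p*x) \<le> 1 / (exp (p*x) / 2)"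
    using c by (intro divide_left_mono) auto
  also have "\<dots> = 2 * exp (- (p*x))" by (simp add: exp_minus field_simps)
  finally have "1 / cosh (p*x) \<le> 2 * exp (- (p*x))" .
  then have "phi p x \<le> (2 * exp (- (p*x))) powr (1/p)"
    unfolding phi_def using p by (intro powr_mono2) (auto simp: less_imp_le cosh_pos')
  also have "\<dots> = 2 powr (1/p) * exp (- (p*x)) powr (1/p)" by (simp add: powr_mult)
  also have "exp (- (p*x)) powr (1/p) = exp (- x)" using p by (simp add: powr_def)
  finally show ?thesis .
qed

lemma kernel_bound:
  assumes p: "p > 0" and y: "0 \<le> y" and yx: "y \<le> x"
  shows "phi p x * ps p y \<le> 2 powr (1/p) * exp (y - x)"
proof -
  have "phi p x * ps p y \<le> (2 powr (1/p) * exp (- x)) * exp y"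
    using phi_le[OF p, of x] ps_le[OF p y] y yx phi_pos[of p x] ps_pos[of p y]
    by (intro mult_mono) auto
  also have "\<dots> = 2 powr (1/p) * exp (y - x)" by (simp add: exp_diff exp_minus field_simps)
  finally show ?thesis .
qed

lemma phi_le1: assumes "p > 0" shows "phi p x \<le> 1"
proof -
  have "1 \<le> ps p x" unfolding ps_def using assms by (intro ge_one_powr_ge_zero cosh_real_ge_1) simp
  then show ?thesis unfolding phi_eq by simp
qed

lemma cont_phi: "p > 0 \<Longrightarrow> continuous_on UNIV (phi p)"
  unfolding phi_def by (auto intro!: continuous_intros simp: cosh_pos' less_imp_neq[symmetric])




lemma cont_sbm:
  fixes f :: "real \<Rightarrow> real"
  assumes "continuous_on UNIV f" "A \<in> sets lborel"
  shows "set_borel_measurable lborel A f"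
proof -
  have [measurable]: "f \<in> borel_measurable lborel" using borel_measurable_continuous_onI[OF assms(1)] by simp
  show ?thesis unfolding set_borel_measurable_def using assms(2) by measurable
qed

lemma cont_tt2: "continuous_on UNIV (\<lambda>x. 1 - tt p x ^ 2)"
  unfolding tt_def by (auto intro!: continuous_intros simp: cosh_pos' less_imp_neq[symmetric])

lemma energy:
  fixes w w' :: "real \<Rightarrow> real"
  assumes p: "p > 0" and X: "0 \<le> X" and W: "ac X w w'"
    and i1: "set_integrable lborel {0..X} (\<lambda>x. w' x ^ 2)"
    and i2: "set_integrable lborel {0..X} (\<lambda>x. w x ^ 2)"
  shows "set_integrable lborel {0..X} (\<lambda>x. (w' x + tt p x * w x)^2)"
    and "(LBINT x:{0..X}. (w' x + tt p x * w x)^2)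
         = (LBINT x:{0..X}. w' x ^ 2 + w x ^ 2 - (p + 1) * phi p x powr (2 * p) * w x ^ 2) + tt p X * w X ^ 2"
proof -
  have T: "ac X (\<lambda>x. tt p x * w x) (\<lambda>x. p * (1 - tt p x ^ 2) * w x + tt p x * w' x)"
    using ac_mult[OF X ac_tt[OF X] W] .
  note R1 = ibp(1)[OF X W T] and R2 = ibp(2)[OF X W T]
  define q where "q x = w' x ^ 2 + w x ^ 2 - (p + 1) * phi p x powr (2 * p) * w x ^ 2" for x
  define r where "r x = w' x * (tt p x * w x) + w x * (p * (1 - tt p x ^ 2) * w x + tt p x * w' x)" for x
  have qe: "q x = w' x ^ 2 + w x ^ 2 - (p + 1) * (1 - tt p x ^ 2) * w x ^ 2" for x
    unfolding q_def phi_pow[OF p] ..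
  have iq0: "set_integrable lborel {0..X} (\<lambda>x. w' x ^ 2 + w x ^ 2)"
    using set_integral_add(1)[OF i1 i2] .
  have iq1: "set_integrable lborel {0..X} (\<lambda>x. (p + 1) * (phi p x powr (2 * p) * w x ^ 2))"
  proof -
    have "set_integrable lborel {0..X} (\<lambda>x. w x ^ 2 * phi p x powr (2 * p))"
    proof (rule si_bounded_mult[OF i2])
      show "set_borel_measurable lborel {0..X} (\<lambda>x. phi p x powr (2 * p))"
        unfolding phi_pow[OF p] by (rule cont_sbm[OF cont_tt2]) simp
      show "\<bar>phi p x powr (2 * p)\<bar> \<le> 1" for x using tt_bounds[of p x] phi_pow[OF p, of x] by simp
    qed
    then show ?thesis using p by (simp add: mult.commute)
  qed
  have iq: "set_integrable lborel {0..X} q"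
    unfolding q_def using set_integral_diff(1)[OF iq0 iq1] by (simp add: mult.assoc)
  have ir: "set_integrable lborel {0..X} r" using R1 unfolding r_def .
  have ge: "(w' x + tt p x * w x)^2 = q x + r x" for x
    unfolding qe r_def by (simp add: power2_eq_square algebra_simps)
  show "set_integrable lborel {0..X} (\<lambda>x. (w' x + tt p x * w x)^2)"
    unfolding ge using set_integral_add(1)[OF iq ir] .
  have "(LBINT x:{0..X}. (w' x + tt p x * w x)^2) = (LBINT x:{0..X}. q x) + (LBINT x:{0..X}. r x)"
    unfolding ge using set_integral_add(2)[OF iq ir] .
  also have "(LBINT x:{0..X}. r x) = tt p X * w X ^ 2"
    using R2 unfolding r_def[symmetric] by (simp add: tt_def power2_eq_square algebra_simps)
  finally show "(LBINT x:{0..X}. (w' x + tt p x * w x)^2)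
         = (LBINT x:{0..X}. w' x ^ 2 + w x ^ 2 - (p + 1) * phi p x powr (2 * p) * w x ^ 2) + tt p X * w X ^ 2"
    unfolding q_def .
qed


lemma cont_ps': "continuous_on UNIV (ps p)"
  unfolding ps_def by (auto intro!: continuous_intros simp: cosh_pos' less_imp_neq[symmetric])

lemma exp_int_le1:
  fixes x :: real
  assumes x: "0 \<le> x"
  shows "(LBINT y:{0..x}. exp (y - x)) \<le> 1"
proof -
  have "ac x (\<lambda>y. exp (y - x)) (\<lambda>y. exp (y - x))"
    by (rule ac_C1[OF x]) (auto intro!: derivative_eq_intros continuous_intros)
  from ac_eq[OF this x order_refl] have "(LBINT y:{0..x}. exp (y - x)) = 1 - exp (- x)" by simp
  then show ?thesis by simp
qed

lemma kernel_point:
  fixes w w' :: "real \<Rightarrow> real"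
  assumes p: "p > 0" and x0: "0 \<le> x" and W: "ac x w w'"
    and ig2: "set_integrable lborel {0..x} (\<lambda>y. (w' y + tt p y * w y)^2)"
  shows "(w x - w 0 * phi p x)^2 \<le> (2 powr (1/p))^2 * (LBINT y:{0..x}. exp (y - x) * (w' y + tt p y * w y)^2)"
proof -
  define g where "g y = w' y + tt p y * w y" for y
  define K where "K = 2 powr (1/p)"
  have PS: "ac x (ps p) (\<lambda>y. ps p y * tt p y)" using ac_ps[OF x0 p] .
  have "w x * ps p x - w 0 * ps p 0 = (LBINT y:{0..x}. w' y * ps p y + w y * (ps p y * tt p y))"
    by (rule ibp(2)[OF x0 W PS])
  also have "\<dots> = (LBINT y:{0..x}. ps p y * g y)"
    unfolding g_def by (simp add: algebra_simps)
  finally have e1: "w x * ps p x - w 0 = (LBINT y:{0..x}. ps p y * g y)" by (simp add: ps_0)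
  define I where "I = (LBINT y:{0..x}. ps p y * g y)"
  have hx: "w x - w 0 * phi p x = phi p x * I"
    using e1 ps_pos[of p x] unfolding I_def phi_eq by (simp add: field_simps)
  define a where "a y = ps p y * exp ((x - y) / 2)" for y
  define b where "b y = exp ((y - x) / 2) * g y" for y
  have ab: "a y * b y = ps p y * g y" for y
  proof -
    have "(x - y) / 2 + (y - x) / 2 = 0" by (simp add: field_simps)
    then have "exp ((x - y) / 2) * exp ((y - x) / 2) = 1" by (simp add: exp_add[symmetric])
    then show ?thesis unfolding a_def b_def by (simp add: algebra_simps)
  qed
  have a2: "a y ^ 2 = ps p y ^ 2 * exp (x - y)" for y
  proof -
    have "exp ((x - y) / 2) ^ 2 = exp (x - y)" by (simp add: power2_eq_square exp_add[symmetric])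
    then show ?thesis unfolding a_def by (simp add: power_mult_distrib)
  qed
  have b2: "b y ^ 2 = exp (y - x) * g y ^ 2" for y
  proof -
    have "exp ((y - x) / 2) ^ 2 = exp (y - x)" by (simp add: power2_eq_square exp_add[symmetric])
    then show ?thesis unfolding b_def by (simp add: power_mult_distrib)
  qed
  have ia: "set_integrable lborel {0..x} (\<lambda>y. a y ^ 2)"
    unfolding a2 using cont_ps'[of p]
    by (intro borel_integrable_atLeastAtMost') (auto intro!: continuous_intros intro: continuous_on_subset)
  have ib: "set_integrable lborel {0..x} (\<lambda>y. b y ^ 2)"
  proof -
    have "set_integrable lborel {0..x} (\<lambda>y. g y ^ 2 * exp (y - x))"
    proof (rule si_bounded_mult)
      show "set_integrable lborel {0..x} (\<lambda>y. g y ^ 2)" using ig2 unfolding g_def .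
      show "set_borel_measurable lborel {0..x} (\<lambda>y. exp (y - x))"
        by (rule cont_sbm) (auto intro!: continuous_intros)
      show "\<bar>exp (y - x)\<bar> \<le> 1" if "y \<in> {0..x}" for y using that by simp
    qed
    then show ?thesis unfolding b2 by (simp add: mult.commute)
  qed
  have ig: "set_integrable lborel {0..x} g"
  proof -
    have "set_integrable lborel {0..x} (\<lambda>y. tt p y * w y)"
      using ac_cont[OF W] by (intro borel_integrable_atLeastAtMost')
        (auto intro!: continuous_intros intro: continuous_on_subset simp: tt_def cosh_pos' less_imp_neq[symmetric])
    then show ?thesis unfolding g_def using set_integral_add(1)[OF ac_int[OF W]] by blast
  qed
  have iab: "set_integrable lborel {0..x} (\<lambda>y. a y * b y)"
  proof -
    have "set_integrable lborel {0..x} (\<lambda>y. g y * ps p y)"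
    proof (rule si_bounded_mult[OF ig])
      show "set_borel_measurable lborel {0..x} (ps p)" by (rule cont_sbm[OF cont_ps']) simp
      show "\<bar>ps p y\<bar> \<le> exp x" if "y \<in> {0..x}" for y
      proof -
        have "exp y \<le> exp x" using that by simp
        moreover have "ps p y \<le> exp y" using that ps_le[OF p, of y] by auto
        ultimately show ?thesis using ps_pos[of p y] by (simp del: exp_le_cancel_iff)
      qed
    qed
    then show ?thesis unfolding ab by (simp add: mult.commute)
  qed
  have CS: "I^2 \<le> (LBINT y:{0..x}. a y ^ 2) * (LBINT y:{0..x}. b y ^ 2)"
    using cs_set[OF ia ib iab] unfolding ab I_def .
  have B0: "0 \<le> (LBINT y:{0..x}. b y ^ 2)"
  proof -
    have "set_integrable lborel {0..x} (\<lambda>x. 0::real)" by (simp add: set_integrable_def)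
    from set_integral_mono[OF this ib] show ?thesis by simp
  qed
  have A: "phi p x ^ 2 * (LBINT y:{0..x}. a y ^ 2) \<le> K^2"
  proof -
    have "phi p x ^ 2 * (LBINT y:{0..x}. a y ^ 2) = (LBINT y:{0..x}. phi p x ^ 2 * a y ^ 2)"
      by simp
    also have "\<dots> \<le> (LBINT y:{0..x}. K^2 * exp (y - x))"
    proof (rule set_integral_mono)
      show "set_integrable lborel {0..x} (\<lambda>y. phi p x ^ 2 * a y ^ 2)" using ia by simp
      show "set_integrable lborel {0..x} (\<lambda>y. K^2 * exp (y - x))"
        by (intro borel_integrable_atLeastAtMost') (auto intro!: continuous_intros)
      fix y assume y: "y \<in> {0..x}"
      have k: "phi p x * ps p y \<le> K * exp (y - x)" unfolding K_def using kernel_bound[OF p] y by auto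
      have "(phi p x * ps p y) ^ 2 \<le> (K * exp (y - x))^2"
        using k phi_pos[of p x] ps_pos[of p y] by (intro power_mono) auto
      then have "(phi p x * ps p y) ^ 2 * exp (x - y) \<le> (K * exp (y - x))^2 * exp (x - y)"
        by (intro mult_right_mono) auto
      also have "(K * exp (y - x))^2 * exp (x - y) = K^2 * exp (y - x)"
        by (simp add: power2_eq_square exp_add[symmetric] algebra_simps)
      finally show "phi p x ^ 2 * a y ^ 2 \<le> K^2 * exp (y - x)"
        unfolding a2 by (simp add: power_mult_distrib algebra_simps)
    qed
    also have "\<dots> = K^2 * (LBINT y:{0..x}. exp (y - x))" by simp
    also have "\<dots> \<le> K^2 * 1" using exp_int_le1[OF x0] by (intro mult_left_mono) auto
    finally show ?thesis by simp
  qed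
  have "(w x - w 0 * phi p x)^2 = phi p x ^ 2 * I ^ 2" unfolding hx by (simp add: power_mult_distrib)
  also have "\<dots> \<le> phi p x ^ 2 * ((LBINT y:{0..x}. a y ^ 2) * (LBINT y:{0..x}. b y ^ 2))"
    using CS by (intro mult_left_mono) auto
  also have "\<dots> = (phi p x ^ 2 * (LBINT y:{0..x}. a y ^ 2)) * (LBINT y:{0..x}. b y ^ 2)" by simp
  also have "\<dots> \<le> K^2 * (LBINT y:{0..x}. b y ^ 2)"
    using A B0 by (intro mult_right_mono) auto
  finally show ?thesis unfolding K_def b2 g_def .
qed


lemma set_integral_nonneg':
  fixes f :: "real \<Rightarrow> real"
  assumes "set_integrable lborel S f" "\<And>x. x \<in> S \<Longrightarrow> 0 \<le> f x"
  shows "0 \<le> (LBINT x:S. f x)"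
proof -
  have "set_integrable lborel S (\<lambda>x. 0::real)" by (simp add: set_integrable_def)
  from set_integral_mono[OF this assms(1)] assms(2) show ?thesis by simp
qed

lemma component:
  fixes w w' :: "real \<Rightarrow> real"
  assumes p: "p > 0" and X0: "0 \<le> X" and W: "ac X w w'"
    and i1: "set_integrable lborel {0..X} (\<lambda>x. w' x ^ 2)"
    and i2: "set_integrable lborel {0..X} (\<lambda>x. w x ^ 2)"
  shows "(LBINT x:{0..X}. (w x - w 0 * phi p x)^2) \<le> (2 powr (1/p))^2 *
     ((LBINT x:{0..X}. w' x ^ 2 + w x ^ 2 - (p + 1) * phi p x powr (2 * p) * w x ^ 2) + tt p X * w X ^ 2)"
proof -
  define K where "K = 2 powr (1/p)"
  define G where "G y = (w' y + tt p y * w y)^2" for y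
  have iG: "set_integrable lborel {0..X} G" unfolding G_def by (rule energy(1)[OF p X0 W i1 i2])
  have eG: "(LBINT x:{0..X}. G x) = (LBINT x:{0..X}. w' x ^ 2 + w x ^ 2 - (p + 1) * phi p x powr (2 * p) * w x ^ 2) + tt p X * w X ^ 2"
    unfolding G_def by (rule energy(2)[OF p X0 W i1 i2])
  define F where "F x = (LBINT y:{0..x}. exp y * G y)" for x
  have iEG: "set_integrable lborel {0..X} (\<lambda>y. exp y * G y)"
  proof -
    have "set_integrable lborel {0..X} (\<lambda>y. G y * exp y)"
    proof (rule si_bounded_mult[OF iG])
      show "set_borel_measurable lborel {0..X} exp" by (rule cont_sbm) (auto intro!: continuous_intros)
      show "\<bar>exp y\<bar> \<le> exp X" if "y \<in> {0..X}" for y using that by simp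
    qed
    then show ?thesis by (simp add: mult.commute)
  qed
  have F0: "F 0 = 0"
  proof -
    have "F 0 = (LBINT y:{}. exp y * G y)" unfolding F_def
      by (rule set_integral_discrete_difference[where X="{0}"]) auto
    then show ?thesis by (simp add: set_lebesgue_integral_def)
  qed
  have acF: "ac X F (\<lambda>y. exp y * G y)" unfolding ac_def using iEG F0 F_def by simp
  have E: "ac X (\<lambda>x. - exp (- x)) (\<lambda>x. exp (- x))"
    by (rule ac_C1[OF X0]) (auto intro!: derivative_eq_intros continuous_intros)
  note J1 = ibp(1)[OF X0 acF E] and J2 = ibp(2)[OF X0 acF E]
  have rew: "exp y * G y * (- exp (- y)) + F y * exp (- y) = F y * exp (- y) - G y" for y
    by (simp add: exp_minus field_simps)
  have iFe: "set_integrable lborel {0..X} (\<lambda>y. F y * exp (- y))"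
  proof -
    have "set_integrable lborel {0..X} (\<lambda>y. (F y * exp (- y) - G y) + G y)"
      using set_integral_add(1)[OF J1[unfolded rew] iG] .
    then show ?thesis by simp
  qed
  have "F X * (- exp (- X)) - F 0 * (- exp (- 0)) = (LBINT y:{0..X}. F y * exp (- y) - G y)"
    using J2 unfolding rew .
  also have "\<dots> = (LBINT y:{0..X}. F y * exp (- y)) - (LBINT y:{0..X}. G y)"
    by (rule set_integral_diff(2)[OF iFe iG])
  finally have eF: "(LBINT y:{0..X}. F y * exp (- y)) = (LBINT y:{0..X}. G y) - F X * exp (- X)"
    using F0 by simp
  have FX: "0 \<le> F X" unfolding F_def
    by (rule set_integral_nonneg'[OF iEG]) (simp add: G_def)
  have ih: "set_integrable lborel {0..X} (\<lambda>x. (w x - w 0 * phi p x)^2)"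
    using ac_cont[OF W] cont_phi[OF p]
    by (intro borel_integrable_atLeastAtMost') (auto intro!: continuous_intros intro: continuous_on_subset)
  have "(LBINT x:{0..X}. (w x - w 0 * phi p x)^2) \<le> (LBINT x:{0..X}. K^2 * (F x * exp (- x)))"
  proof (rule set_integral_mono[OF ih])
    show "set_integrable lborel {0..X} (\<lambda>x. K^2 * (F x * exp (- x)))" using iFe by simp
    fix x assume x: "x \<in> {0..X}"
    have Wx: "ac x w w'" using ac_sub[OF W] x by auto
    have iGx: "set_integrable lborel {0..x} (\<lambda>y. (w' y + tt p y * w y)^2)"
      using set_integrable_subset[OF iG, of "{0..x}"] x unfolding G_def by auto
    have "(w x - w 0 * phi p x)^2 \<le> K^2 * (LBINT y:{0..x}. exp (y - x) * (w' y + tt p y * w y)^2)"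
      unfolding K_def using kernel_point[OF p _ Wx iGx] x by auto
    also have "(LBINT y:{0..x}. exp (y - x) * (w' y + tt p y * w y)^2) = (LBINT y:{0..x}. exp (- x) * (exp y * G y))"
      unfolding G_def by (simp add: exp_diff exp_minus field_simps)
    also have "\<dots> = exp (- x) * F x" unfolding F_def by simp
    finally show "(w x - w 0 * phi p x)^2 \<le> K^2 * (F x * exp (- x))" by (simp add: mult.commute)
  qed
  also have "\<dots> = K^2 * ((LBINT y:{0..X}. G y) - F X * exp (- X))" using eF by simp
  also have "\<dots> \<le> K^2 * (LBINT y:{0..X}. G y)" using FX by (intro mult_left_mono) auto
  finally show ?thesis unfolding eG K_def .
qed




lemma si_sum:
  fixes f :: "'i \<Rightarrow> real \<Rightarrow> real"
  assumes "\<And>i. i \<in> I \<Longrightarrow> set_integrable lborel S (f i)"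
  shows "set_integrable lborel S (\<lambda>x. \<Sum>i\<in>I. f i x)"
    and "(LBINT x:S. (\<Sum>i\<in>I. f i x)) = (\<Sum>i\<in>I. LBINT x:S. f i x)"
proof -
  have e: "(\<lambda>x. indicator S x *\<^sub>R (\<Sum>i\<in>I. f i x)) = (\<lambda>x. \<Sum>i\<in>I. indicator S x *\<^sub>R f i x)"
    by (simp add: sum_distrib_left)
  show "set_integrable lborel S (\<lambda>x. \<Sum>i\<in>I. f i x)"
    using assms Bochner_Integration.integrable_sum[where I=I and M=lborel and f="\<lambda>i x. indicator S x *\<^sub>R f i x"]
    unfolding set_integrable_def e by blast
  show "(LBINT x:S. (\<Sum>i\<in>I. f i x)) = (\<Sum>i\<in>I. LBINT x:S. f i x)"
    using assms Bochner_Integration.integral_sum[where I=I and M=lborel and f="\<lambda>i x. indicator S x *\<^sub>R f i x"]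
    unfolding set_integrable_def set_lebesgue_integral_def e by blast
qed

lemma l2_mult:
  fixes f g :: "real \<Rightarrow> real"
  assumes "set_integrable lborel S (\<lambda>x. f x ^ 2)" "set_integrable lborel S (\<lambda>x. g x ^ 2)"
    "set_borel_measurable lborel S f" "set_borel_measurable lborel S g"
  shows "set_integrable lborel S (\<lambda>x. f x * g x)"
proof (rule set_integrable_bound[of _ _ "\<lambda>x. (f x ^ 2 + g x ^ 2) / 2"])
  show "set_integrable lborel S (\<lambda>x. (f x ^ 2 + g x ^ 2) / 2)"
    using set_integral_add(1)[OF assms(1,2)] by auto
  show "set_borel_measurable lborel S (\<lambda>x. f x * g x)" by (rule sbm_mult[OF assms(3,4)])
  show "AE x in lborel. x \<in> S \<longrightarrow> norm (f x * g x) \<le> norm ((f x ^ 2 + g x ^ 2) / 2)"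
  proof (intro AE_I2 impI)
    fix x
    have "0 \<le> (\<bar>f x\<bar> - \<bar>g x\<bar>)^2" by simp
    then have "2 * (\<bar>f x\<bar> * \<bar>g x\<bar>) \<le> f x ^ 2 + g x ^ 2" by (simp add: power2_eq_square algebra_simps)
    then show "norm (f x * g x) \<le> norm ((f x ^ 2 + g x ^ 2) / 2)" by (simp add: abs_mult)
  qed
qed

lemma H1_ac: "H1_half w w' \<Longrightarrow> 0 \<le> X \<Longrightarrow> ac X w w'"
  unfolding H1_half_def ac_def by (meson atLeastAtMost_iff)

lemma phi_sq_int:
  assumes p: "p > 0"
  shows "set_integrable lborel {0..} (\<lambda>x. phi p x ^ 2)"
proof (rule set_integrable_bound[of _ _ "\<lambda>x. (2 powr (1/p))^2 * exp (- x)"])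
  show "set_integrable lborel {0..} (\<lambda>x. (2 powr (1/p))^2 * exp (- x))"
    using exp_integrable by simp
  show "set_borel_measurable lborel {0..} (\<lambda>x. phi p x ^ 2)"
    using cont_phi[OF p] by (intro cont_sbm) (auto intro!: continuous_intros)
  show "AE x in lborel. x \<in> {0..} \<longrightarrow> norm (phi p x ^ 2) \<le> norm ((2 powr (1/p))^2 * exp (- x))"
  proof (intro AE_I2 impI)
    fix x :: real assume "x \<in> {0..}"
    then have x: "0 \<le> x" by simp
    have "phi p x ^ 2 \<le> (2 powr (1/p) * exp (- x))^2"
      using phi_le[OF p x] phi_pos[of p x] by (intro power_mono) auto
    also have "\<dots> = (2 powr (1/p))^2 * (exp (- x) * exp (- x))" by (simp add: power2_eq_square)
    also have "\<dots> \<le> (2 powr (1/p))^2 * (exp (- x) * 1)"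
      using x by (intro mult_left_mono) auto
    finally show "norm (phi p x ^ 2) \<le> norm ((2 powr (1/p))^2 * exp (- x))" by simp
  qed
qed

lemma limit_argument:
  fixes hs qs :: "nat \<Rightarrow> real \<Rightarrow> real" and S :: "real \<Rightarrow> real"
  assumes ih: "\<And>j. j < N \<Longrightarrow> set_integrable lborel {0..} (hs j)"
    and iq: "\<And>j. j < N \<Longrightarrow> set_integrable lborel {0..} (qs j)"
    and iS: "set_integrable lborel {0..} S" and Snn: "\<And>x. 0 \<le> S x" and K: "K2 > 0"
    and bd: "\<And>X. 0 \<le> X \<Longrightarrow> (\<Sum>j<N. LBINT x:{0..X}. hs j x) \<le> K2 * ((\<Sum>j<N. LBINT x:{0..X}. qs j x) + S X)"
  shows "(\<Sum>j<N. LBINT x:{0..}. hs j x) \<le> K2 * (\<Sum>j<N. LBINT x:{0..}. qs j x)"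
proof (rule ccontr)
  define D where "D X = (\<Sum>j<N. LBINT x:{0..X}. hs j x) - K2 * (\<Sum>j<N. LBINT x:{0..X}. qs j x)" for X
  define Dinf where "Dinf = (\<Sum>j<N. LBINT x:{0..}. hs j x) - K2 * (\<Sum>j<N. LBINT x:{0..}. qs j x)"
  assume "\<not> ?thesis"
  then have Dpos: "Dinf > 0" unfolding Dinf_def by simp
  have lim: "(D \<longlongrightarrow> Dinf) at_top"
    unfolding D_def Dinf_def
    by (intro tendsto_diff tendsto_mult tendsto_const tendsto_sum tendsto_set_lebesgue_integral_at_top ih iq) auto
  have "eventually (\<lambda>X. Dinf / 2 < D X) at_top"
    using order_tendstoD(1)[OF lim, of "Dinf / 2"] Dpos by linarith
  then obtain X0 where X0: "\<And>X. X \<ge> X0 \<Longrightarrow> Dinf / 2 < D X"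
    unfolding eventually_at_top_linorder by blast
  define X1 where "X1 = max X0 0"
  define eps where "eps = Dinf / (2 * K2)"
  have eps: "eps > 0" unfolding eps_def using Dpos K by simp
  have Sge: "eps \<le> S X" if "X \<ge> X1" for X
  proof -
    have "X \<ge> X0" "X \<ge> 0" using that unfolding X1_def by auto
    then have "Dinf / 2 < D X" using X0 by blast
    moreover have "D X \<le> K2 * S X" using bd[of X] \<open>X \<ge> 0\<close> unfolding D_def by (simp add: algebra_simps)
    ultimately have "Dinf / 2 < K2 * S X" by simp
    then show ?thesis unfolding eps_def using K by (simp add: field_simps)
  qed
  define T where "T = (LBINT x:{0..}. S x)"
  define M where "M = T / eps + 1"
  have T0: "0 \<le> T" unfolding T_def by (rule set_integral_nonneg'[OF iS Snn])
  have M0: "M \<ge> 0" unfolding M_def using T0 eps by simp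
  have X10: "X1 \<ge> 0" unfolding X1_def by simp
  have iS2: "set_integrable lborel {X1..X1+M} S"
    by (rule set_integrable_subset[OF iS]) (use X10 in auto)
  have "M * eps = (LBINT x:{X1..X1+M}. eps)"
    using set_integral_const[of "{X1..X1+M}" lborel eps] M0 by simp
  also have "\<dots> \<le> (LBINT x:{X1..X1+M}. S x)"
  proof (rule set_integral_mono[OF _ iS2])
    show "set_integrable lborel {X1..X1+M} (\<lambda>x. eps)"
      by (intro borel_integrable_atLeastAtMost') (auto intro!: continuous_intros)
    show "eps \<le> S x" if "x \<in> {X1..X1+M}" for x using Sge that by auto
  qed
  also have "\<dots> \<le> T"
  proof -
    have "(\<integral>x. indicator {X1..X1+M} x *\<^sub>R S x \<partial>lborel) \<le> (\<integral>x. indicator {0..} x *\<^sub>R S x \<partial>lborel)"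
    proof (rule integral_mono)
      show "integrable lborel (\<lambda>x. indicator {X1..X1+M} x *\<^sub>R S x)" using iS2 unfolding set_integrable_def .
      show "integrable lborel (\<lambda>x. indicator {0..} x *\<^sub>R S x)" using iS unfolding set_integrable_def .
      show "indicator {X1..X1+M} x *\<^sub>R S x \<le> indicator {0..} x *\<^sub>R S x" for x
        using X10 Snn[of x] by (auto simp: indicator_def)
    qed
    then show ?thesis unfolding T_def set_lebesgue_integral_def .
  qed
  finally have "M * eps \<le> T" .
  moreover have "M * eps = T + eps" unfolding M_def using eps by (simp add: field_simps)
  ultimately show False using eps by simp
qed


theorem lemma3p1:
  fixes N :: nat and p :: real
  assumes "N \<ge> 3" and "p > 0"
  shows "\<exists>C>0. \<forall>W W'. H1_Gamma N W W' \<and> in_L2c N p W \<longrightarrow>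
           Lminus_form N p W W' \<ge> C * H1_norm_sq N W W'"
proof -
  have p: "p > 0" by (rule assms(2))
  define K2 where "K2 = (2 powr (1/p))^2"
  have K2: "K2 > 0" unfolding K2_def by simp
  define C where "C = 1 / (1 + (p+1) * K2)"
  have C: "C > 0" unfolding C_def using p K2 by (simp add: add_pos_pos)
  show ?thesis
  proof (intro exI[of _ C] conjI allI impI C)
    fix W W' assume H: "H1_Gamma N W W' \<and> in_L2c N p W"
    define a where "a = W 0 0"
    have H1: "\<And>j. j < N \<Longrightarrow> H1_half (W j) (W' j)" and w0: "\<And>j. j < N \<Longrightarrow> W j 0 = a"
      using H unfolding H1_Gamma_def a_def by blast+
    have orth: "(\<Sum>j<N. LBINT x:{0..}. W j x * phi p x) = 0" using H unfolding in_L2c_def by blast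
    have mW: "\<And>j. j < N \<Longrightarrow> set_borel_measurable lborel {0..} (W j)"
      and iW: "\<And>j. j < N \<Longrightarrow> set_integrable lborel {0..} (\<lambda>x. (W j x)^2)"
      and iW': "\<And>j. j < N \<Longrightarrow> set_integrable lborel {0..} (\<lambda>x. (W' j x)^2)"
      using H1 unfolding H1_half_def L2_half_def by blast+
    have mphi: "set_borel_measurable lborel {0..} (phi p)" by (rule cont_sbm[OF cont_phi[OF p]]) simp
    have iphi: "set_integrable lborel {0..} (\<lambda>x. phi p x ^ 2)" by (rule phi_sq_int[OF p])
    have iWphi: "set_integrable lborel {0..} (\<lambda>x. W j x * phi p x)" if "j < N" for j
      by (rule l2_mult[OF iW[OF that] iphi mW[OF that] mphi])
    define h where "h j x = (W j x - a * phi p x)^2" for j x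
    define q where "q j x = (W' j x)^2 + (W j x)^2 - (p + 1) * (phi p x) powr (2 * p) * (W j x)^2" for j x
    define R where "R j x = (p + 1) * ((phi p x) powr (2 * p) * (W j x)^2)" for j x
    have he: "h j x = (W j x)^2 - (2 * a * (W j x * phi p x) - a^2 * phi p x ^ 2)" for j x
      unfolding h_def by (simp add: power2_eq_square algebra_simps)
    have ih: "set_integrable lborel {0..} (h j)" if "j < N" for j
    proof -
      have "set_integrable lborel {0..} (\<lambda>x. 2 * a * (W j x * phi p x) - a^2 * phi p x ^ 2)"
        using iWphi[OF that] iphi by (intro set_integral_diff(1)) auto
      from set_integral_diff(1)[OF iW[OF that] this] show ?thesis unfolding he[abs_def] .
    qed
    have pw_b: "\<bar>phi p x powr (2 * p)\<bar> \<le> 1" "0 \<le> phi p x powr (2 * p)" for x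
      using tt_bounds[of p x] phi_pow[OF p, of x] by auto
    have iR: "set_integrable lborel {0..} (R j)" if "j < N" for j
    proof -
      have "set_integrable lborel {0..} (\<lambda>x. (W j x)^2 * phi p x powr (2 * p))"
      proof (rule si_bounded_mult[OF iW[OF that]])
        show "set_borel_measurable lborel {0..} (\<lambda>x. phi p x powr (2 * p))"
          unfolding phi_pow[OF p] by (rule cont_sbm[OF cont_tt2]) simp
      qed (rule pw_b)
      then show ?thesis unfolding R_def using p by (simp add: mult.commute)
    qed
    have iB: "set_integrable lborel {0..} (\<lambda>x. (W' j x)^2 + (W j x)^2)" if "j < N" for j
      using set_integral_add(1)[OF iW'[OF that] iW[OF that]] .
    have qe: "q j x = ((W' j x)^2 + (W j x)^2) - R j x" for j x
      unfolding q_def R_def by (simp add: algebra_simps)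
    have iq: "set_integrable lborel {0..} (q j)" if "j < N" for j
      unfolding qe[abs_def] using set_integral_diff(1)[OF iB[OF that] iR[OF that]] .
    define S where "S x = (\<Sum>j<N. (W j x)^2)" for x
    have iS: "set_integrable lborel {0..} S" unfolding S_def[abs_def] by (rule si_sum(1)) (use iW in auto)
    have bd: "(\<Sum>j<N. LBINT x:{0..X}. h j x) \<le> K2 * ((\<Sum>j<N. LBINT x:{0..X}. q j x) + S X)"
      if X: "0 \<le> X" for X
    proof -
      have "(LBINT x:{0..X}. h j x) \<le> K2 * ((LBINT x:{0..X}. q j x) + (W j X)^2)" if j: "j < N" for j
      proof -
        have acj: "ac X (W j) (W' j)" by (rule H1_ac[OF H1[OF j] X])
        have i1: "set_integrable lborel {0..X} (\<lambda>x. W' j x ^ 2)"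
          by (rule set_integrable_subset[OF iW'[OF j]]) auto
        have i2: "set_integrable lborel {0..X} (\<lambda>x. W j x ^ 2)"
          by (rule set_integrable_subset[OF iW[OF j]]) auto
        have "(LBINT x:{0..X}. h j x) \<le> K2 * ((LBINT x:{0..X}. q j x) + tt p X * W j X ^ 2)"
          using component[OF p X acj i1 i2] w0[OF j] unfolding h_def q_def K2_def by simp
        also have "\<dots> \<le> K2 * ((LBINT x:{0..X}. q j x) + (W j X)^2)"
        proof -
          have "tt p X \<le> 1" unfolding tt_def using tanh_real_lt_1[of "p*X"] by simp
          then have "tt p X * W j X ^ 2 \<le> 1 * W j X ^ 2" by (intro mult_right_mono) auto
          then show ?thesis using K2 by (intro mult_left_mono) auto
        qed
        finally show ?thesis .
      qed
      then have "(\<Sum>j<N. LBINT x:{0..X}. h j x) \<le> (\<Sum>j<N. K2 * ((LBINT x:{0..X}. q j x) + (W j X)^2))"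
        by (intro sum_mono) auto
      also have "\<dots> = K2 * ((\<Sum>j<N. LBINT x:{0..X}. q j x) + S X)"
        by (simp only: S_def sum.distrib[symmetric] sum_distrib_left)
      finally show ?thesis .
    qed
    have LIM: "(\<Sum>j<N. LBINT x:{0..}. h j x) \<le> K2 * (\<Sum>j<N. LBINT x:{0..}. q j x)"
      by (rule limit_argument[OF ih iq iS _ K2 bd]) (auto simp: S_def intro: sum_nonneg)
    define A where "A j = (LBINT x:{0..}. (W j x)^2)" for j
    define Hs where "Hs j = (LBINT x:{0..}. h j x)" for j
    define P where "P j = (LBINT x:{0..}. W j x * phi p x)" for j
    have step: "A j - a * P j \<le> (A j + Hs j) / 2" if j: "j < N" for j
    proof -
      have e: "W j x * (W j x - a * phi p x) = (W j x)^2 - a * (W j x * phi p x)" for x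
        by (simp add: power2_eq_square algebra_simps)
      have i: "set_integrable lborel {0..} (\<lambda>x. (W j x)^2 - a * (W j x * phi p x))"
        using iWphi[OF j] by (intro set_integral_diff(1)[OF iW[OF j]]) auto
      have "A j - a * P j = (LBINT x:{0..}. (W j x)^2 - a * (W j x * phi p x))"
        unfolding A_def P_def using iWphi[OF j] by (subst set_integral_diff(2)[OF iW[OF j]]) auto
      also have "\<dots> \<le> (LBINT x:{0..}. ((W j x)^2 + h j x) / 2)"
      proof (rule set_integral_mono[OF i])
        show "set_integrable lborel {0..} (\<lambda>x. ((W j x)^2 + h j x) / 2)"
          using set_integral_add(1)[OF iW[OF j] ih[OF j]] by auto
        fix x
        have "0 \<le> (W j x - (W j x - a * phi p x))^2" by simp
        then show "(W j x)^2 - a * (W j x * phi p x) \<le> ((W j x)^2 + h j x) / 2"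
          unfolding h_def by (simp add: power2_eq_square algebra_simps)
      qed
      also have "\<dots> = (A j + Hs j) / 2"
        unfolding A_def Hs_def using set_integral_add(2)[OF iW[OF j] ih[OF j]] by simp
      finally show ?thesis .
    qed
    have sumP: "(\<Sum>j<N. P j) = 0" using orth unfolding P_def .
    have "(\<Sum>j<N. A j - a * P j) \<le> (\<Sum>j<N. (A j + Hs j) / 2)" by (intro sum_mono step) auto
    then have AH: "(\<Sum>j<N. A j) \<le> (\<Sum>j<N. Hs j)"
      using sumP by (simp add: sum_subtractf sum_distrib_left[symmetric] sum.distrib sum_divide_distrib[symmetric])
    define B where "B j = (LBINT x:{0..}. (W' j x)^2 + (W j x)^2)" for j
    define Q where "Q j = (LBINT x:{0..}. q j x)" for j
    define RR where "RR j = (LBINT x:{0..}. R j x)" for j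
    have QB: "Q j = B j - RR j" if j: "j < N" for j
      unfolding Q_def B_def RR_def qe using set_integral_diff(2)[OF iB[OF j] iR[OF j]] by simp
    have RA: "RR j \<le> (p + 1) * A j" if j: "j < N" for j
    proof -
      have "RR j \<le> (LBINT x:{0..}. (p + 1) * (W j x)^2)"
        unfolding RR_def
      proof (rule set_integral_mono[OF iR[OF j]])
        show "set_integrable lborel {0..} (\<lambda>x. (p + 1) * (W j x)^2)" using iW[OF j] by auto
        fix x
        have "phi p x powr (2 * p) * (W j x)^2 \<le> 1 * (W j x)^2"
          using pw_b(1)[of x] by (intro mult_right_mono) auto
        then show "R j x \<le> (p + 1) * (W j x)^2" unfolding R_def using p by (intro mult_left_mono) auto
      qed
      then show ?thesis unfolding A_def by simp
    qed
    have LF: "Lminus_form N p W W' = (\<Sum>j<N. Q j)" unfolding Lminus_form_def Q_def q_def ..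
    have HN: "H1_norm_sq N W W' = (\<Sum>j<N. B j)" unfolding H1_norm_sq_def B_def ..
    have "(\<Sum>j<N. B j) = (\<Sum>j<N. Q j) + (\<Sum>j<N. RR j)"
      using QB by (simp add: sum.distrib[symmetric])
    also have "\<dots> \<le> (\<Sum>j<N. Q j) + (p + 1) * (\<Sum>j<N. A j)"
    proof -
      have "(\<Sum>j<N. RR j) \<le> (\<Sum>j<N. (p + 1) * A j)" using RA by (intro sum_mono) auto
      then show ?thesis by (simp add: sum_distrib_left)
    qed
    also have "\<dots> \<le> (\<Sum>j<N. Q j) + (p + 1) * (\<Sum>j<N. Hs j)"
      using AH p by (intro add_left_mono mult_left_mono) auto
    also have "\<dots> \<le> (\<Sum>j<N. Q j) + (p + 1) * (K2 * (\<Sum>j<N. Q j))"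
      using LIM p unfolding Hs_def Q_def by (intro add_left_mono mult_left_mono) auto
    finally have fin: "(\<Sum>j<N. B j) \<le> (1 + (p + 1) * K2) * (\<Sum>j<N. Q j)" by (simp add: algebra_simps)
    have pos: "1 + (p + 1) * K2 > 0" using p K2 by (simp add: add_pos_pos)
    show "C * H1_norm_sq N W W' \<le> Lminus_form N p W W'"
      unfolding LF HN C_def using fin pos by (simp add: field_simps)
  qed
qed


end
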